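(* Let $m\ge 2$ and $c\ge 1$. Then the best-worst rule $s=(c,m)$ admits no non-convergent Nash equilibrium.
   Context: Setting: voters' ideal points are distributed uniformly (unit mass, Lebesgue measure) on the issue space $[0,1]$. There are $m\ge 2$ candidates; a profile is $x=(x_1,\dots,x_m)\in[0,1]^m$, where $x_i$ is the platform of candidate $i$. A voter with ideal point $y$ ranks candidates by distance $|x_i-y|$ (closer is better); ties are broken by a fair lottery (uniformly random strict order among tied candidates). Fix $c\ge 0$. Under the best-worst rule $s=(c,m)$, a candidate receives $1$ point from each voter ranking her first, $-c$ points from each voter ranking her last ($m$-th), and $0$ otherwise. Candidate $i$'s score $v_i(x)$ is the expected total number of points received. A (pure-strategy Nash) equilibrium is a profile $x^*$ with $v_i(x^* )\ge v_i(t,x^*_{-i})$ for all $i$ and $t\in[0,1]$, where $(t,x_{-i})$ denotes $x$ with $x_i$ replaced by $t$. A non-convergent Nash equilibrium (NCNE) is an equilibrium in which at least two platforms are distinct. *)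

theory Defs
  imports "HOL-Analysis.Analysis"
begin

text \<open>Candidates are indexed by 0..m-1; a profile is x :: nat => real (only x 0 .. x (m-1) matter). A voter at y ranks candidates by distance; ties broken by a uniformly
random strict order among tied candidates, so candidate i is ranked first with probability
1/|argmin| if i is in the argmin of distances, and last with probability 1/|argmax| if i is in
the argmax.\<close>

definition closest_set :: "nat \<Rightarrow> (nat \<Rightarrow> real) \<Rightarrow> real \<Rightarrow> nat set" where
  "closest_set m x y = {j. j < m \<and> (\<forall>k<m. \<bar>x j - y\<bar> \<le> \<bar>x k - y\<bar>)}"

definition farthest_set :: "nat \<Rightarrow> (nat \<Rightarrow> real) \<Rightarrow> real \<Rightarrow> nat set" where
  "farthest_set m x y = {j. j < m \<and> (\<forall>k<m. \<bar>x k - y\<bar> \<le> \<bar>x j - y\<bar>)}"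

definition prob_first :: "nat \<Rightarrow> (nat \<Rightarrow> real) \<Rightarrow> nat \<Rightarrow> real \<Rightarrow> real" where
  "prob_first m x i y = (if i \<in> closest_set m x y then 1 / real (card (closest_set m x y)) else 0)"

definition prob_last :: "nat \<Rightarrow> (nat \<Rightarrow> real) \<Rightarrow> nat \<Rightarrow> real \<Rightarrow> real" where
  "prob_last m x i y = (if i \<in> farthest_set m x y then 1 / real (card (farthest_set m x y)) else 0)"

definition bw_score :: "real \<Rightarrow> nat \<Rightarrow> (nat \<Rightarrow> real) \<Rightarrow> nat \<Rightarrow> real" where
  "bw_score c m x i = integral {0..1} (\<lambda>y. prob_first m x i y - c * prob_last m x i y)"

definition is_profile :: "nat \<Rightarrow> (nat \<Rightarrow> real) \<Rightarrow> bool" where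
  "is_profile m x \<longleftrightarrow> (\<forall>i<m. x i \<in> {0..1})"

definition is_nash_eq :: "real \<Rightarrow> nat \<Rightarrow> (nat \<Rightarrow> real) \<Rightarrow> bool" where
  "is_nash_eq c m x \<longleftrightarrow> is_profile m x \<and>
     (\<forall>i<m. \<forall>t\<in>{0..1}. bw_score c m (x(i := t)) i \<le> bw_score c m x i)"

definition is_NCNE :: "real \<Rightarrow> nat \<Rightarrow> (nat \<Rightarrow> real) \<Rightarrow> bool" where
  "is_NCNE c m x \<longleftrightarrow> is_nash_eq c m x \<and> (\<exists>i<m. \<exists>j<m. x i \<noteq> x j)"

end

theory Submission
  imports Defs
begin
lemma cs: assumes "closed {y::real. Q y}" shows "{y \<in> space borel. Q y} \<in> sets borel"
  using borel_closed[OF assms] by simp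

lemma closed_all1: "closed {y::real. \<forall>k<m. \<bar>(x::nat\<Rightarrow>real) j - y\<bar> \<le> \<bar>x k - y\<bar>}"
proof -
  have "{y::real. \<forall>k<m. \<bar>x j - y\<bar> \<le> \<bar>x k - y\<bar>} = (\<Inter>k\<in>{..<m}. {y. \<bar>x j - y\<bar> \<le> \<bar>x k - y\<bar>})" by auto
  moreover have "closed (\<Inter>k\<in>{..<m}. {y::real. \<bar>x j - y\<bar> \<le> \<bar>x k - y\<bar>})"
    by (intro closed_INT ballI closed_Collect_le continuous_intros)
  ultimately show ?thesis by simp
qed
lemma closed_all2: "closed {y::real. \<forall>k<m. \<bar>(x::nat\<Rightarrow>real) k - y\<bar> \<le> \<bar>x j - y\<bar>}"
proof -
  have "{y::real. \<forall>k<m. \<bar>x k - y\<bar> \<le> \<bar>x j - y\<bar>} = (\<Inter>k\<in>{..<m}. {y. \<bar>x k - y\<bar> \<le> \<bar>x j - y\<bar>})" by auto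
  moreover have "closed (\<Inter>k\<in>{..<m}. {y::real. \<bar>x k - y\<bar> \<le> \<bar>x j - y\<bar>})"
    by (intro closed_INT ballI closed_Collect_le continuous_intros)
  ultimately show ?thesis by simp
qed

lemma card_closest: "real (card (closest_set m x y)) = (\<Sum>j<m. if (\<forall>k<m. \<bar>x j - y\<bar> \<le> \<bar>x k - y\<bar>) then 1 else 0)"
  unfolding closest_set_def
  by (simp add: sum.If_cases lessThan_def Collect_conj_eq[symmetric] conj_commute)
lemma card_farthest: "real (card (farthest_set m x y)) = (\<Sum>j<m. if (\<forall>k<m. \<bar>x k - y\<bar> \<le> \<bar>x j - y\<bar>) then 1 else 0)"
  unfolding farthest_set_def
  by (simp add: sum.If_cases lessThan_def Collect_conj_eq[symmetric] conj_commute)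

lemma pf_meas: "prob_first m x i \<in> borel_measurable borel"
proof -
  have e: "prob_first m x i = (\<lambda>y. if (\<forall>k<m. \<bar>x i - y\<bar> \<le> \<bar>x k - y\<bar>) \<and> i < m then 1 / (\<Sum>j<m. if (\<forall>k<m. \<bar>x j - y\<bar> \<le> \<bar>x k - y\<bar>) then 1 else 0) else 0)"
    by (rule ext) (simp only: prob_first_def card_closest, auto simp: closest_set_def)
  show ?thesis unfolding e
  proof (intro measurable_If borel_measurable_divide borel_measurable_sum measurable_const)
    show "{y \<in> space borel. (\<forall>k<m. \<bar>x i - y\<bar> \<le> \<bar>x k - y\<bar>) \<and> i < m} \<in> sets borel"
      by (cases "i < m") (auto intro: cs closed_all1)
    show "{y \<in> space borel. \<forall>k<m. \<bar>x j - y\<bar> \<le> \<bar>x k - y\<bar>} \<in> sets borel" for j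
      by (intro cs closed_all1)
  qed simp_all
qed
lemma pl_meas: "prob_last m x i \<in> borel_measurable borel"
proof -
  have e: "prob_last m x i = (\<lambda>y. if (\<forall>k<m. \<bar>x k - y\<bar> \<le> \<bar>x i - y\<bar>) \<and> i < m then 1 / (\<Sum>j<m. if (\<forall>k<m. \<bar>x k - y\<bar> \<le> \<bar>x j - y\<bar>) then 1 else 0) else 0)"
    by (rule ext) (simp only: prob_last_def card_farthest, auto simp: farthest_set_def)
  show ?thesis unfolding e
  proof (intro measurable_If borel_measurable_divide borel_measurable_sum measurable_const)
    show "{y \<in> space borel. (\<forall>k<m. \<bar>x k - y\<bar> \<le> \<bar>x i - y\<bar>) \<and> i < m} \<in> sets borel"
      by (cases "i < m") (auto intro: cs closed_all2)
    show "{y \<in> space borel. \<forall>k<m. \<bar>x k - y\<bar> \<le> \<bar>x j - y\<bar>} \<in> sets borel" for j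
      by (intro cs closed_all2)
  qed simp_all
qed

lemma borel_int:
  fixes f :: "real \<Rightarrow> real"
  assumes "f \<in> borel_measurable borel" "\<And>y. \<bar>f y\<bar> \<le> 1"
  shows "f integrable_on {0..1}"
proof (rule measurable_bounded_by_integrable_imp_integrable[where g="\<lambda>_. 1::real"])
  have "f \<in> borel_measurable lborel" using assms(1) by simp
  then have "f \<in> borel_measurable lebesgue" by (rule measurable_completion)
  then show "f \<in> borel_measurable (lebesgue_on {0..1})" by (rule measurable_restrict_space1)
  show "(\<lambda>_. 1::real) integrable_on {0..(1::real)}" by (rule Henstock_Kurzweil_Integration.integrable_const_ivl)
qed (use assms in auto)
lemma closest_ne: "0 < m \<Longrightarrow> closest_set m x y \<noteq> {}"
proof -
  assume m: "0 < m"
  let ?S = "(\<lambda>j. \<bar>x j - y\<bar>) ` {..<m}"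
  have "finite ?S" "?S \<noteq> {}" using m by auto
  then have "Min ?S \<in> ?S" by (rule Min_in)
  then obtain j where j: "j < m" "\<bar>x j - y\<bar> = Min ?S" by auto
  have "\<forall>k<m. \<bar>x j - y\<bar> \<le> \<bar>x k - y\<bar>" using j by auto
  then show ?thesis using j unfolding closest_set_def by auto
qed
lemma farthest_ne: "0 < m \<Longrightarrow> farthest_set m x y \<noteq> {}"
proof -
  assume m: "0 < m"
  let ?S = "(\<lambda>j. \<bar>x j - y\<bar>) ` {..<m}"
  have "finite ?S" "?S \<noteq> {}" using m by auto
  then have "Max ?S \<in> ?S" by (rule Max_in)
  then obtain j where j: "j < m" "\<bar>x j - y\<bar> = Max ?S" by auto
  have "\<forall>k<m. \<bar>x k - y\<bar> \<le> \<bar>x j - y\<bar>" using j by auto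
  then show ?thesis using j unfolding farthest_set_def by auto
qed

lemma closest_fin: "finite (closest_set m x y)" unfolding closest_set_def by auto
lemma farthest_fin: "finite (farthest_set m x y)" unfolding farthest_set_def by auto

lemma pf_bounds: "0 \<le> prob_first m x i y" "prob_first m x i y \<le> 1"
proof -
  show "0 \<le> prob_first m x i y" unfolding prob_first_def by auto
  show "prob_first m x i y \<le> 1"
  proof (cases "i \<in> closest_set m x y")
    case True
    then have "card (closest_set m x y) \<ge> 1" using closest_fin
      by (metis One_nat_def Suc_leI card_gt_0_iff empty_iff)
    then show ?thesis using True unfolding prob_first_def by simp
  qed (simp add: prob_first_def)
qed
lemma pl_bounds: "0 \<le> prob_last m x i y" "prob_last m x i y \<le> 1"
proof -
  show "0 \<le> prob_last m x i y" unfolding prob_last_def by auto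
  show "prob_last m x i y \<le> 1"
  proof (cases "i \<in> farthest_set m x y")
    case True
    then have "card (farthest_set m x y) \<ge> 1" using farthest_fin
      by (metis One_nat_def Suc_leI card_gt_0_iff empty_iff)
    then show ?thesis using True unfolding prob_last_def by simp
  qed (simp add: prob_last_def)
qed

lemma g_int: "(\<lambda>y. prob_first m x i y - c * prob_last m x i y) integrable_on {0..1}"
proof -
  have "prob_first m x i integrable_on {0..1}"
    using pf_meas pf_bounds by (intro borel_int) (auto simp: abs_le_iff)
  moreover have "prob_last m x i integrable_on {0..1}"
    using pl_meas pl_bounds by (intro borel_int) (auto simp: abs_le_iff)
  then have "(\<lambda>y. c * prob_last m x i y) integrable_on {0..1}"
    using integrable_on_cmult_left[of "prob_last m x i" "{0..1}" c] by simp
  ultimately show ?thesis by (rule integrable_diff)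
qed

lemma g_bounds: "c \<ge> 0 \<Longrightarrow> -c \<le> prob_first m x i y - c * prob_last m x i y \<and> prob_first m x i y - c * prob_last m x i y \<le> 1"
proof -
  assume c: "c \<ge> 0"
  have "c * prob_last m x i y \<le> c" using pl_bounds[of m x i y] c by (simp add: mult_left_le)
  moreover have "0 \<le> c * prob_last m x i y" using pl_bounds[of m x i y] c by simp
  ultimately show ?thesis using pf_bounds[of m x i y] by linarith
qed

lemma sum_pf: "0 < m \<Longrightarrow> (\<Sum>i<m. prob_first m x i y) = 1"
proof -
  assume m: "0 < m"
  let ?C = "closest_set m x y"
  have sub: "?C \<subseteq> {..<m}" unfolding closest_set_def by auto
  have "(\<Sum>i<m. prob_first m x i y) = (\<Sum>i\<in>{..<m} \<inter> ?C. 1 / real (card ?C))"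
    unfolding prob_first_def by (rule sum.inter_restrict[symmetric]) simp
  also have "{..<m} \<inter> ?C = ?C" using sub by auto
  also have "(\<Sum>i\<in>?C. 1 / real (card ?C)) = 1"
    using closest_ne[OF m] closest_fin by simp
  finally show ?thesis .
qed
lemma sum_pl: "0 < m \<Longrightarrow> (\<Sum>i<m. prob_last m x i y) = 1"
proof -
  assume m: "0 < m"
  let ?C = "farthest_set m x y"
  have sub: "?C \<subseteq> {..<m}" unfolding farthest_set_def by auto
  have "(\<Sum>i<m. prob_last m x i y) = (\<Sum>i\<in>{..<m} \<inter> ?C. 1 / real (card ?C))"
    unfolding prob_last_def by (rule sum.inter_restrict[symmetric]) simp
  also have "{..<m} \<inter> ?C = ?C" using sub by auto
  also have "(\<Sum>i\<in>?C. 1 / real (card ?C)) = 1"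
    using farthest_ne[OF m] farthest_fin by simp
  finally show ?thesis .
qed

lemma total: "0 < m \<Longrightarrow> (\<Sum>i<m. bw_score c m x i) = 1 - c"
proof -
  assume m: "0 < m"
  have "(\<Sum>i<m. bw_score c m x i) = integral {0..1} (\<lambda>y. \<Sum>i<m. prob_first m x i y - c * prob_last m x i y)"
    unfolding bw_score_def by (rule integral_sum[symmetric]) (auto intro: g_int)
  also have "(\<lambda>y. \<Sum>i<m. prob_first m x i y - c * prob_last m x i y) = (\<lambda>y. 1 - c)"
  proof
    fix y
    have "(\<Sum>i<m. prob_first m x i y - c * prob_last m x i y) = (\<Sum>i<m. prob_first m x i y) - c * (\<Sum>i<m. prob_last m x i y)"
      by (simp only: sum_subtractf sum_distrib_left)
    then show "(\<Sum>i<m. prob_first m x i y - c * prob_last m x i y) = 1 - c"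
      using sum_pf[OF m] sum_pl[OF m] by simp
  qed
  also have "integral {0..1} (\<lambda>y::real. 1 - c) = 1 - c" by simp
  finally show ?thesis .
qed

lemma uniq_closest:
  assumes "i < m" "\<And>k. k < m \<Longrightarrow> k \<noteq> i \<Longrightarrow> \<bar>z i - y\<bar> < \<bar>z k - y\<bar>"
  shows "prob_first m z i y = 1"
proof -
  have "closest_set m z y = {i}"
    unfolding closest_set_def using assms by (force simp: not_le)
  then show ?thesis unfolding prob_first_def by simp
qed
lemma uniq_farthest:
  assumes "i < m" "\<And>k. k < m \<Longrightarrow> k \<noteq> i \<Longrightarrow> \<bar>z k - y\<bar> < \<bar>z i - y\<bar>"
  shows "prob_last m z i y = 1"
proof -
  have "farthest_set m z y = {i}"
    unfolding farthest_set_def using assms by (force simp: not_le)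
  then show ?thesis unfolding prob_last_def by simp
qed
lemma not_closest:
  assumes "k < m" "\<bar>z k - y\<bar> < \<bar>z i - y\<bar>"
  shows "prob_first m z i y = 0"
  using assms unfolding prob_first_def closest_set_def by (auto simp: not_le)
lemma not_farthest:
  assumes "k < m" "\<bar>z i - y\<bar> < \<bar>z k - y\<bar>"
  shows "prob_last m z i y = 0"
  using assms unfolding prob_last_def farthest_set_def by (auto simp: not_le)

lemma ind_int:
  assumes "0 \<le> lo" "lo \<le> hi" "hi \<le> 1"
  shows "((\<lambda>y. if y \<in> {lo..hi} then 1 else 0) has_integral (hi - lo)) {0..1::real}"
proof -
  have "((\<lambda>y. 1::real) has_integral (hi - lo)) {lo..hi}"
    using has_integral_const_real[of "1::real" lo hi] assms by simp
  moreover have "{lo..hi} \<inter> {0..1} = {lo..hi}" using assms by auto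
  ultimately show ?thesis by (simp only: has_integral_restrict_Int)
qed

lemma other_ex: "2 \<le> (m::nat) \<Longrightarrow> i < m \<Longrightarrow> \<exists>k<m. k \<noteq> i"
  by (rule exI[of _ "if i = 0 then 1 else 0"]) auto

lemma caseA:
  assumes m: "2 \<le> m" and i: "i < m" and c: "0 \<le> c"
    and oth: "\<And>j. j < m \<Longrightarrow> j \<noteq> i \<Longrightarrow> x j = p" and ne: "x i \<noteq> p"
    and xi: "x i \<in> {0..1}" and p: "p \<in> {0..1}"
  shows "bw_score c m x i < bw_score c m (x(i := (x i + p) / 2)) i"
proof -
  define t where "t = (x i + p) / 2"
  define x' where "x' = x(i := t)"
  define G where "G = (\<lambda>z y. prob_first m z i y - c * prob_last m z i y)"
  obtain k where k: "k < m" "k \<noteq> i" using other_ex[OF m i] by blast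
  have xk: "x k = p" using oth k by auto
  have x'i: "x' i = t" and x'k: "x' k = p" using k xk by (auto simp: x'_def)
  have oth': "\<And>j. j < m \<Longrightarrow> j \<noteq> i \<Longrightarrow> x' j = p" using oth by (auto simp: x'_def)
  have closer: "G x' y = 1" if "\<bar>t - y\<bar> < \<bar>p - y\<bar>" for y
  proof -
    have "prob_first m x' i y = 1"
      by (rule uniq_closest[OF i]) (use that oth' x'i in auto)
    moreover have "prob_last m x' i y = 0"
      by (rule not_farthest[OF k(1)]) (use that x'i x'k in auto)
    ultimately show ?thesis by (simp add: G_def)
  qed
  have farther: "G x y = -c" if "\<bar>p - y\<bar> < \<bar>x i - y\<bar>" for y
  proof -
    have "prob_first m x i y = 0"
      by (rule not_closest[OF k(1)]) (use that xk in auto)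
    moreover have "prob_last m x i y = 1"
      by (rule uniq_farthest[OF i]) (use that oth in auto)
    ultimately show ?thesis by (simp add: G_def)
  qed
  have dich: "\<bar>t - y\<bar> < \<bar>p - y\<bar> \<or> \<bar>p - y\<bar> < \<bar>x i - y\<bar>" for y
    using ne unfolding t_def by (auto simp: abs_if split: if_splits)
  have bnd: "-c \<le> G z y \<and> G z y \<le> 1" for z y
    using g_bounds[OF c] by (simp add: G_def)
  have pw: "G x y \<le> G x' y" for y
    using dich[of y] closer[of y] farther[of y] bnd[of x y] bnd[of x' y] by auto
  define D where "D = p - t"
  define lo where "lo = min (t + D/8) (t + 3*D/8)"
  define hi where "hi = max (t + D/8) (t + 3*D/8)"
  have Dne: "D \<noteq> 0" using ne by (simp add: D_def t_def)
  have hl: "hi - lo = \<bar>D\<bar> / 4" unfolding hi_def lo_def by (auto simp: abs_if min_def max_def)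
  have b4: "0 \<le> t + D/8" "t + D/8 \<le> 1" "0 \<le> t+3*D/8" "t + 3*D/8 \<le> 1"
    using xi p unfolding D_def t_def by (auto simp: field_simps)
  have lo0: "0 \<le> lo" and hi1: "hi \<le> 1" and lohi: "lo \<le> hi"
    using b4 unfolding lo_def hi_def by auto
  have strict: "1 \<le> G x' y - G x y" if "y \<in> {lo..hi}" for y
  proof -
    have xiD: "x i = t - D" and pD: "p = t + D" by (simp_all add: D_def t_def field_simps)
    have "\<bar>t - y\<bar> < \<bar>p - y\<bar> \<and> \<bar>p - y\<bar> < \<bar>x i - y\<bar>"
    proof (cases "D > 0")
      case True
      then have y1: "t + D/8 \<le> y" "y \<le> t + 3*D/8" using that unfolding lo_def hi_def by (auto simp: min_def max_def)
      have "\<bar>t - y\<bar> = y - t" "\<bar>t + D - y\<bar> = t + D - y" "\<bar>t - D - y\<bar> = y - t + D"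
        using y1 True by (simp_all add: abs_if)
      then show ?thesis unfolding xiD pD using y1 True by simp
    next
      case False
      then have D0: "D < 0" using Dne by simp
      then have y1: "t + 3*D/8 \<le> y" "y \<le> t + D/8" using that unfolding lo_def hi_def by (auto simp: min_def max_def)
      have "\<bar>t - y\<bar> = t - y" "\<bar>t + D - y\<bar> = y - t - D" "\<bar>t - D - y\<bar> = t - D - y"
        using y1 D0 by (simp_all add: abs_if)
      then show ?thesis unfolding xiD pD using y1 D0 by simp
    qed
    then show ?thesis using closer farther c by auto
  qed
  have intG: "G z integrable_on {0..1}" for z unfolding G_def by (rule g_int)
  have "hi - lo \<le> integral {0..1} (\<lambda>y. G x' y - G x y)"
  proof -
    have "integral {0..1} (\<lambda>y. if y \<in> {lo..hi} then 1 else 0) \<le> integral {0..1} (\<lambda>y. G x' y - G x y)"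
    proof (rule integral_le)
      show "(\<lambda>y. if y \<in> {lo..hi} then 1::real else 0) integrable_on {0..1::real}"
        by (rule has_integral_integrable[OF ind_int[OF lo0 lohi hi1]])
      show "(\<lambda>y. G x' y - G x y) integrable_on {0..1}" by (intro integrable_diff intG)
      show "(if y \<in> {lo..hi} then 1 else 0) \<le> G x' y - G x y" for y
        using strict[of y] pw[of y] by auto
    qed
    then show ?thesis using integral_unique[OF ind_int[OF lo0 lohi hi1]] by simp
  qed
  also have "\<dots> = integral {0..1} (G x') - integral {0..1} (G x)"
    by (rule integral_diff) (rule intG)+
  finally have "integral {0..1} (G x) < integral {0..1} (G x')" using hl Dne by simp
  then show ?thesis unfolding bw_score_def G_def x'_def t_def by simp
qed

lemma posdev:
  assumes i: "i < m" and j: "j < m" "j \<noteq> i" and k: "k < m" "k \<noteq> i"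
    and jk: "x j < x k" and gap: "\<And>l. l < m \<Longrightarrow> l \<noteq> i \<Longrightarrow> x l \<le> x j \<or> x k \<le> x l"
    and xj: "0 \<le> x j" and xk: "x k \<le> 1" and c: "0 \<le> c"
  shows "0 < bw_score c m (x(i := (x j + x k) / 2)) i"
proof -
  define t where "t = (x j + x k) / 2"
  define x' where "x' = x(i := t)"
  define G where "G = (\<lambda>y. prob_first m x' i y - c * prob_last m x' i y)"
  define d where "d = (x k - x j) / 8"
  have d0: "0 < d" using jk by (simp add: d_def)
  have x'i: "x' i = t" and x'o: "\<And>l. l \<noteq> i \<Longrightarrow> x' l = x l" by (auto simp: x'_def)
  have nl: "prob_last m x' i y = 0" for y
  proof (cases "y \<le> t")
    case True
    have "\<bar>x' i - y\<bar> < \<bar>x' k - y\<bar>" using True jk x'i x'o[OF k(2)] unfolding t_def by (simp add: abs_if)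
    then show ?thesis by (rule not_farthest[OF k(1)])
  next
    case False
    have "\<bar>x' i - y\<bar> < \<bar>x' j - y\<bar>" using False jk x'i x'o[OF j(2)] unfolding t_def by (simp add: abs_if)
    then show ?thesis by (rule not_farthest[OF j(1)])
  qed
  have Gnn: "0 \<le> G y" for y using nl[of y] pf_bounds[of m x' i y] by (simp add: G_def)
  have G1: "G y = 1" if "y \<in> {t - d..t + d}" for y
  proof -
    have "prob_first m x' i y = 1"
    proof (rule uniq_closest[OF i])
      fix l assume l: "l < m" "l \<noteq> i"
      have yy: "t - d \<le> y" "y \<le> t + d" using that by auto
      have td: "t = x j + 4 * d" "t = x k - 4 * d" by (simp_all add: t_def d_def field_simps)
      have "\<bar>t - y\<bar> \<le> d" using yy by (simp add: abs_if)
      moreover have "3 * d \<le> \<bar>x l - y\<bar>"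
        using gap[OF l] yy td by (auto simp: abs_if)
      ultimately show "\<bar>x' i - y\<bar> < \<bar>x' l - y\<bar>" using x'i x'o[OF l(2)] d0 by simp
    qed
    then show ?thesis using nl[of y] by (simp add: G_def)
  qed
  have b: "0 \<le> t - d" "t - d \<le> t + d" "t + d \<le> 1"
    using xj xk jk d0 by (simp_all add: t_def d_def field_simps)
  have "integral {0..1} (\<lambda>y. if y \<in> {t - d..t + d} then 1::real else 0) \<le> integral {0..1} G"
  proof (rule integral_le)
    show "(\<lambda>y. if y \<in> {t - d..t + d} then 1::real else 0) integrable_on {0..1::real}"
      by (rule has_integral_integrable[OF ind_int[OF b]])
    show "G integrable_on {0..1}" unfolding G_def by (rule g_int)
    show "(if y \<in> {t - d..t + d} then 1::real else 0) \<le> G y" for y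
      using G1[of y] Gnn[of y] by auto
  qed
  then have "2 * d \<le> integral {0..1} G" using integral_unique[OF ind_int[OF b]] by simp
  then show ?thesis using d0 unfolding bw_score_def G_def x'_def t_def by simp
qed

theorem proposition2:
  fixes m :: nat and c :: real
  assumes "m \<ge> 2" and "c \<ge> 1"
  shows "\<not> (\<exists>x. is_NCNE c m x)"
proof
  assume "\<exists>x. is_NCNE c m x"
  then obtain x where ncne: "is_NCNE c m x" by blast
  have prof: "\<And>i. i < m \<Longrightarrow> x i \<in> {0..1}" and eq: "\<And>i t. i < m \<Longrightarrow> t \<in> {0..1} \<Longrightarrow> bw_score c m (x(i := t)) i \<le> bw_score c m x i"
    using ncne unfolding is_NCNE_def is_nash_eq_def is_profile_def by auto
  obtain a b where ab: "a < m" "b < m" "x a \<noteq> x b" using ncne unfolding is_NCNE_def by blast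
  have c0: "0 \<le> c" using assms by simp
  show False
  proof (cases "\<exists>i<m. \<exists>p. (\<forall>j<m. j \<noteq> i \<longrightarrow> x j = p) \<and> x i \<noteq> p")
    case True
    then obtain i p where i: "i < m" and oth: "\<And>j. j < m \<Longrightarrow> j \<noteq> i \<Longrightarrow> x j = p" and ne: "x i \<noteq> p" by blast
    obtain k where k: "k < m" "k \<noteq> i" using other_ex[OF assms(1) i] by blast
    have p: "p \<in> {0..1}" using prof[OF k(1)] oth[OF k] by simp
    have t: "(x i + p) / 2 \<in> {0..1}" using prof[OF i] p by auto
    show False using caseA[where x=x and p=p, OF assms(1) i c0 oth ne prof[OF i] p] eq[OF i t] by simp
  next
    case False
    have pos: "0 < bw_score c m x i" if i: "i < m" for i
    proof -
      have "\<exists>j k. j < m \<and> j \<noteq> i \<and> k < m \<and> k \<noteq> i \<and> x j < x k"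
      proof (rule ccontr)
        assume nex: "\<not> ?thesis"
        obtain k0 where k0: "k0 < m" "k0 \<noteq> i" using other_ex[OF assms(1) i] by blast
        have oth: "\<forall>j<m. j \<noteq> i \<longrightarrow> x j = x k0"
        proof (intro allI impI)
          fix j assume "j < m" "j \<noteq> i"
          then show "x j = x k0" using nex k0 by (metis linorder_neqE_linordered_idom)
        qed
        then have "x i = x k0" using False i by blast
        then have "\<forall>j<m. x j = x k0" using oth by metis
        then show False using ab by metis
      qed
      then obtain j k where j: "j < m" "j \<noteq> i" and k: "k < m" "k \<noteq> i" and jk: "x j < x k" by blast
      define S where "S = x ` {l. l < m \<and> l \<noteq> i \<and> x l < x k}"
      have Sfin: "finite S" unfolding S_def by simp
      have Sne: "S \<noteq> {}" using j jk unfolding S_def by blast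
      have "Max S \<in> S" using Sfin Sne by (rule Max_in)
      then obtain j' where j': "j' < m" "j' \<noteq> i" "x j' < x k" "x j' = Max S" unfolding S_def by auto
      have gap: "x l \<le> x j' \<or> x k \<le> x l" if "l < m" "l \<noteq> i" for l
      proof (cases "x l < x k")
        case True
        then have "x l \<in> S" using that unfolding S_def by blast
        then show ?thesis using Max_ge[OF Sfin] j'(4) by simp
      qed simp
      have "0 < bw_score c m (x(i := (x j' + x k) / 2)) i"
        by (rule posdev[OF i j'(1,2) k j'(3) gap]) (use prof[OF j'(1)] prof[OF k(1)] c0 in auto)
      moreover have "(x j' + x k) / 2 \<in> {0..1}" using prof[OF j'(1)] prof[OF k(1)] by auto
      ultimately show ?thesis using eq[OF i] by fastforce
    qed
    have "(0::nat) \<in> {..<m}" using assms(1) by simp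
    then have ne: "{..<m} \<noteq> {}" by blast
    have "0 < (\<Sum>i<m. bw_score c m x i)"
      using ne by (intro sum_pos) (auto intro: pos)
    moreover have "(\<Sum>i<m. bw_score c m x i) = 1 - c" using assms(1) by (intro total) simp
    ultimately show False using assms(2) by simp
  qed
qed
end
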